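(* Let $X$ and $Y$ be finite $T_0$-spaces. If $X$ and $Y$ are simple homotopy equivalent, then $|\det(X_M)|=|\det(Y_M)|$.
   Context: A finite $T_0$-space is identified with a finite poset via $x\le y$ iff $U_x\subseteq U_y$, where $U_x$ is the minimal open set containing $x$. For a labelling $X=\{x_1,\dots,x_n\}$, $X_M=(x_{i,j})$ is the $n\times n$ matrix with $x_{i,j}=0$ if $x_i\le x_j$ and $x_{i,j}=1$ otherwise. A point $x$ is a weak beat point if $\{y:y<x\}$ is contractible or $\{y:y>x\}$ is contractible. Two finite $T_0$-spaces are simple homotopy equivalent if one can be obtained from the other (up to homeomorphism) by a finite sequence of adding and removing weak beat points one at a time. *)

theory Defs
  imports "HOL-Analysis.Analysis" "Jordan_Normal_Form.Determinant"
begin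

text \<open>A finite T0-space is represented (as in the paper) by its associated finite
  poset: a finite carrier S together with a partial order R on S
  (R x y meaning U_x is contained in U_y).\<close>

definition finite_poset :: "'a set \<Rightarrow> ('a \<Rightarrow> 'a \<Rightarrow> bool) \<Rightarrow> bool" where
  "finite_poset S R \<longleftrightarrow> finite S
     \<and> (\<forall>x\<in>S. R x x)
     \<and> (\<forall>x\<in>S. \<forall>y\<in>S. R x y \<and> R y x \<longrightarrow> x = y)
     \<and> (\<forall>x\<in>S. \<forall>y\<in>S. \<forall>z\<in>S. R x y \<and> R y z \<longrightarrow> R x z)"

text \<open>The finite T0 topology on S recovered from the order: open sets are the down-sets,
  so the minimal open set of x is U_x = {y in S. R y x}.\<close>

definition poset_topology :: "'a set \<Rightarrow> ('a \<Rightarrow> 'a \<Rightarrow> bool) \<Rightarrow> 'a topology" where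
  "poset_topology S R =
     topology (\<lambda>U. U \<subseteq> S \<and> (\<forall>x\<in>U. \<forall>y\<in>S. R y x \<longrightarrow> y \<in> U))"

text \<open>Contractible (as usual, contractible spaces are nonempty).\<close>

definition contractible_sub :: "'a set \<Rightarrow> ('a \<Rightarrow> 'a \<Rightarrow> bool) \<Rightarrow> 'a set \<Rightarrow> bool" where
  "contractible_sub S R A \<longleftrightarrow> A \<noteq> {} \<and> contractible_space (subtopology (poset_topology S R) A)"

definition weak_beat_point :: "'a set \<Rightarrow> ('a \<Rightarrow> 'a \<Rightarrow> bool) \<Rightarrow> 'a \<Rightarrow> bool" where
  "weak_beat_point S R x \<longleftrightarrow> x \<in> S \<and>
     (contractible_sub S R {y\<in>S. R y x \<and> y \<noteq> x}
      \<or> contractible_sub S R {y\<in>S. R x y \<and> y \<noteq> x})"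

definition wbp_step :: "'a set \<Rightarrow> ('a \<Rightarrow> 'a \<Rightarrow> bool) \<Rightarrow> 'a set \<Rightarrow> ('a \<Rightarrow> 'a \<Rightarrow> bool) \<Rightarrow> bool" where
  "wbp_step S R S' R' \<longleftrightarrow> finite_poset S R \<and> finite_poset S' R' \<and>
     ((\<exists>x. weak_beat_point S R x \<and>
          poset_topology (S - {x}) R homeomorphic_space poset_topology S' R')
    \<or> (\<exists>x. weak_beat_point S' R' x \<and>
          poset_topology S R homeomorphic_space poset_topology (S' - {x}) R'))"

definition simple_homotopy_equivalent ::
  "'a set \<Rightarrow> ('a \<Rightarrow> 'a \<Rightarrow> bool) \<Rightarrow> 'a set \<Rightarrow> ('a \<Rightarrow> 'a \<Rightarrow> bool) \<Rightarrow> bool" where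
  "simple_homotopy_equivalent S R T R' \<longleftrightarrow>
     (\<exists>S0 R0. (\<lambda>(A,r) (B,r'). wbp_step A r B r')\<^sup>*\<^sup>* (S, R) (S0, R0)
        \<and> poset_topology S0 R0 homeomorphic_space poset_topology T R')"

definition space_matrix :: "nat \<Rightarrow> (nat \<Rightarrow> 'a) \<Rightarrow> ('a \<Rightarrow> 'a \<Rightarrow> bool) \<Rightarrow> int mat" where
  "space_matrix n f R = mat n n (\<lambda>(i,j). if R (f i) (f j) then 0 else 1)"

end

theory Submission
  imports Defs
begin


definition pchains :: "'a set \<Rightarrow> ('a \<Rightarrow> 'a \<Rightarrow> bool) \<Rightarrow> 'a set set" where
  "pchains S R = {c. c \<subseteq> S \<and> (\<forall>a\<in>c. \<forall>b\<in>c. R a b \<or> R b a)}"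

definition rho :: "'a set \<Rightarrow> ('a \<Rightarrow> 'a \<Rightarrow> bool) \<Rightarrow> int" where
  "rho S R = (\<Sum>c\<in>pchains S R. (-1) ^ card c)"

lemma finite_chains: "finite S \<Longrightarrow> finite (pchains S R)"
  unfolding pchains_def by (rule finite_subset[of _ "Pow S"]) auto

lemma rho_empty: "rho {} R = 1"
proof -
  have "pchains {} R = {{}}" unfolding pchains_def by auto
  thus ?thesis unfolding rho_def by simp
qed

lemma finite_poset_subset: "finite_poset S R \<Longrightarrow> T \<subseteq> S \<Longrightarrow> finite_poset T R"
  unfolding finite_poset_def by (meson finite_subset subsetD)

lemma rho_join:
  assumes fp: "finite_poset S R" and L: "L \<subseteq> S" and U: "U \<subseteq> S"
    and LU: "\<And>a b. a \<in> L \<Longrightarrow> b \<in> U \<Longrightarrow> R a b \<and> \<not> R b a"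
  shows "(\<Sum>c\<in>pchains (L \<union> U) R. (-1::int) ^ card c) = rho L R * rho U R"
proof -
  have fin: "finite S" using fp unfolding finite_poset_def by auto
  have finL: "finite L" and finU: "finite U" using fin L U finite_subset by auto
  have disj: "L \<inter> U = {}" using LU by blast
  have bij: "bij_betw (\<lambda>(a,b). a \<union> b) (pchains L R \<times> pchains U R) (pchains (L \<union> U) R)"
  proof (rule bij_betw_byWitness[where f' = "\<lambda>c. (c \<inter> L, c \<inter> U)"])
    show "\<forall>x\<in>pchains L R \<times> pchains U R. (\<lambda>c. (c \<inter> L, c \<inter> U)) ((\<lambda>(a, b). a \<union> b) x) = x"
    proof
      fix x assume x: "x \<in> pchains L R \<times> pchains U R"
      obtain a b where ab: "x = (a,b)" by fastforce
      have "a \<subseteq> L" "b \<subseteq> U" using x ab unfolding pchains_def by auto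
      hence "(a \<union> b) \<inter> L = a" "(a \<union> b) \<inter> U = b" using disj by blast+
      thus "(\<lambda>c. (c \<inter> L, c \<inter> U)) ((\<lambda>(a, b). a \<union> b) x) = x" using ab by simp
    qed
    show "\<forall>y\<in>pchains (L \<union> U) R. (\<lambda>(a, b). a \<union> b) ((\<lambda>c. (c \<inter> L, c \<inter> U)) y) = y"
    proof
      fix y assume "y \<in> pchains (L \<union> U) R"
      hence "y \<subseteq> L \<union> U" unfolding pchains_def by blast
      thus "(\<lambda>(a, b). a \<union> b) ((\<lambda>c. (c \<inter> L, c \<inter> U)) y) = y" by auto
    qed
    show "(\<lambda>(a, b). a \<union> b) ` (pchains L R \<times> pchains U R) \<subseteq> pchains (L \<union> U) R"
    proof
      fix y assume "y \<in> (\<lambda>(a, b). a \<union> b) ` (pchains L R \<times> pchains U R)"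
      then obtain a b where ab: "a \<in> pchains L R" "b \<in> pchains U R" "y = a \<union> b" by auto
      have aL: "a \<subseteq> L" and bU: "b \<subseteq> U" using ab unfolding pchains_def by auto
      have ca: "\<forall>p\<in>a. \<forall>q\<in>a. R p q \<or> R q p" and cb: "\<forall>p\<in>b. \<forall>q\<in>b. R p q \<or> R q p"
        using ab unfolding pchains_def by auto
      have "\<forall>p\<in>y. \<forall>q\<in>y. R p q \<or> R q p"
      proof (intro ballI)
        fix p q assume "p \<in> y" "q \<in> y"
        thus "R p q \<or> R q p" using ab(3) ca cb aL bU LU by (metis Un_iff subsetD)
      qed
      moreover have "y \<subseteq> L \<union> U" using aL bU ab(3) by blast
      ultimately show "y \<in> pchains (L \<union> U) R" unfolding pchains_def by blast
    qed
    show "(\<lambda>c. (c \<inter> L, c \<inter> U)) ` pchains (L \<union> U) R \<subseteq> pchains L R \<times> pchains U R"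
    proof
      fix z assume "z \<in> (\<lambda>c. (c \<inter> L, c \<inter> U)) ` pchains (L \<union> U) R"
      then obtain c where c: "c \<in> pchains (L \<union> U) R" "z = (c \<inter> L, c \<inter> U)" by blast
      have "\<forall>p\<in>c. \<forall>q\<in>c. R p q \<or> R q p" using c unfolding pchains_def by blast
      hence "c \<inter> L \<in> pchains L R" "c \<inter> U \<in> pchains U R" unfolding pchains_def by blast+
      thus "z \<in> pchains L R \<times> pchains U R" using c by simp
    qed
  qed
  have "(\<Sum>c\<in>pchains (L \<union> U) R. (-1::int) ^ card c)
      = (\<Sum>p\<in>pchains L R \<times> pchains U R. (-1::int) ^ card ((\<lambda>(a,b). a \<union> b) p))"
    using sum.reindex_bij_betw[OF bij, of "\<lambda>c. (-1::int) ^ card c"] by simp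
  also have "\<dots> = (\<Sum>p\<in>pchains L R \<times> pchains U R. (-1::int) ^ card (fst p) * (-1) ^ card (snd p))"
  proof (rule sum.cong[OF refl])
    fix p assume p: "p \<in> pchains L R \<times> pchains U R"
    obtain a b where ab: "p = (a,b)" by fastforce
    have "a \<subseteq> L" "b \<subseteq> U" using p ab unfolding pchains_def by auto
    hence "card (a \<union> b) = card a + card b"
      using disj finL finU by (meson card_Un_disjoint disjoint_iff finite_subset subsetD)
    thus "(-1::int) ^ card ((\<lambda>(a,b). a \<union> b) p) = (-1) ^ card (fst p) * (-1) ^ card (snd p)"
      using ab by (simp add: power_add)
  qed
  also have "\<dots> = rho L R * rho U R"
    unfolding rho_def sum_product sum.cartesian_product by (simp add: case_prod_beta)
  finally show ?thesis .
qed

lemma rho_remove: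
  assumes fp: "finite_poset S R" and x: "x \<in> S"
  shows "rho S R = rho (S - {x}) R
      - rho {y\<in>S. R y x \<and> y \<noteq> x} R * rho {y\<in>S. R x y \<and> y \<noteq> x} R"
proof -
  define L where "L = {y\<in>S. R y x \<and> y \<noteq> x}"
  define U where "U = {y\<in>S. R x y \<and> y \<noteq> x}"
  have fin: "finite S" using fp unfolding finite_poset_def by auto
  have reflS: "\<And>y. y \<in> S \<Longrightarrow> R y y" and antis: "\<And>a b. a \<in> S \<Longrightarrow> b \<in> S \<Longrightarrow> R a b \<Longrightarrow> R b a \<Longrightarrow> a = b"
    and trans: "\<And>a b c. a \<in> S \<Longrightarrow> b \<in> S \<Longrightarrow> c \<in> S \<Longrightarrow> R a b \<Longrightarrow> R b c \<Longrightarrow> R a c"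
    using fp unfolding finite_poset_def by blast+
  have LU: "\<And>a b. a \<in> L \<Longrightarrow> b \<in> U \<Longrightarrow> R a b \<and> \<not> R b a"
  proof -
    fix a b assume a: "a \<in> L" and b: "b \<in> U"
    have "R a b" using a b x trans unfolding L_def U_def by blast
    moreover have "\<not> R b a"
    proof
      assume "R b a"
      hence "R b x" using a b x trans unfolding L_def U_def by blast
      thus False using b x antis unfolding U_def by blast
    qed
    ultimately show "R a b \<and> \<not> R b a" by blast
  qed
  have split: "pchains S R = pchains (S - {x}) R \<union> {c\<in>pchains S R. x \<in> c}"
    unfolding pchains_def by auto
  have disj: "pchains (S - {x}) R \<inter> {c\<in>pchains S R. x \<in> c} = {}"
    unfolding pchains_def by auto
  have finc: "finite (pchains S R)" using finite_chains[OF fin] .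
  have bij: "bij_betw (insert x) (pchains (L \<union> U) R) {c\<in>pchains S R. x \<in> c}"
  proof (rule bij_betw_byWitness[where f' = "\<lambda>c. c - {x}"])
    show "\<forall>a\<in>pchains (L \<union> U) R. insert x a - {x} = a"
      unfolding pchains_def L_def U_def by auto
    show "\<forall>a'\<in>{c \<in> pchains S R. x \<in> c}. insert x (a' - {x}) = a'" by auto
    show "insert x ` pchains (L \<union> U) R \<subseteq> {c \<in> pchains S R. x \<in> c}"
      unfolding pchains_def L_def U_def using x reflS by auto
    show "(\<lambda>c. c - {x}) ` {c \<in> pchains S R. x \<in> c} \<subseteq> pchains (L \<union> U) R"
      unfolding pchains_def L_def U_def by auto
  qed
  have "rho S R = rho (S - {x}) R + (\<Sum>c\<in>{c\<in>pchains S R. x \<in> c}. (-1::int) ^ card c)"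
    unfolding rho_def
    by (subst split, rule sum.union_disjoint) (use finc split disj finite_chains[OF finite_subset[OF _ fin], of "S - {x}" R] in auto)
  also have "(\<Sum>c\<in>{c\<in>pchains S R. x \<in> c}. (-1::int) ^ card c)
      = (\<Sum>c\<in>pchains (L \<union> U) R. (-1::int) ^ card (insert x c))"
    using sum.reindex_bij_betw[OF bij, of "\<lambda>c. (-1::int) ^ card c"] by simp
  also have "\<dots> = (\<Sum>c\<in>pchains (L \<union> U) R. - ((-1::int) ^ card c))"
  proof (rule sum.cong[OF refl])
    fix c assume c: "c \<in> pchains (L \<union> U) R"
    have "c \<subseteq> S" "x \<notin> c" using c unfolding pchains_def L_def U_def by auto
    hence "card (insert x c) = Suc (card c)" using fin by (meson card_insert_disjoint finite_subset)
    thus "(-1::int) ^ card (insert x c) = - ((-1) ^ card c)" by simp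
  qed
  also have "\<dots> = - (rho L R * rho U R)"
    unfolding sum_negf by (subst rho_join[OF fp _ _ LU]) (auto simp: L_def U_def)
  finally show ?thesis unfolding L_def U_def by simp
qed

lemma rho_top:
  assumes fp: "finite_poset S R" and y: "y \<in> S" and top: "\<forall>z\<in>S. R z y"
  shows "rho S R = 0"
proof -
  have antis: "\<And>a b. a \<in> S \<Longrightarrow> b \<in> S \<Longrightarrow> R a b \<Longrightarrow> R b a \<Longrightarrow> a = b"
    using fp unfolding finite_poset_def by blast
  have e1: "{z\<in>S. R z y \<and> z \<noteq> y} = S - {y}" using top by auto
  have e2: "{z\<in>S. R y z \<and> z \<noteq> y} = {}" using top antis y by blast
  show ?thesis using rho_remove[OF fp y] unfolding e1 e2 rho_empty by simp
qed

lemma rho_bot: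
  assumes fp: "finite_poset S R" and y: "y \<in> S" and bot: "\<forall>z\<in>S. R y z"
  shows "rho S R = 0"
proof -
  have antis: "\<And>a b. a \<in> S \<Longrightarrow> b \<in> S \<Longrightarrow> R a b \<Longrightarrow> R b a \<Longrightarrow> a = b"
    using fp unfolding finite_poset_def by blast
  have e1: "{z\<in>S. R y z \<and> z \<noteq> y} = S - {y}" using bot by auto
  have e2: "{z\<in>S. R z y \<and> z \<noteq> y} = {}" using bot antis y by blast
  show ?thesis using rho_remove[OF fp y] unfolding e1 e2 rho_empty by simp
qed

lemma rho_iso:
  assumes h: "bij_betw h S S'" and iso: "\<And>x y. x \<in> S \<Longrightarrow> y \<in> S \<Longrightarrow> R x y = R' (h x) (h y)"
  shows "rho S R = rho S' R'"
proof -
  have inj: "inj_on h S" using h bij_betw_def by blast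
  have bij: "bij_betw (image h) (pchains S R) (pchains S' R')"
  proof (rule bij_betw_byWitness[where f' = "image (inv_into S h)"])
    show "\<forall>a\<in>pchains S R. inv_into S h ` h ` a = a"
      unfolding pchains_def using inj by (auto simp: inv_into_f_f subsetD image_iff)
    show "\<forall>a'\<in>pchains S' R'. h ` inv_into S h ` a' = a'"
      unfolding pchains_def using h by (auto simp: bij_betw_def f_inv_into_f image_iff subsetD)
         (metis bij_betw_def f_inv_into_f h subsetD)
    show "image h ` pchains S R \<subseteq> pchains S' R'"
      unfolding pchains_def using h iso by (auto simp: bij_betw_def) (meson subsetD)
    show "image (inv_into S h) ` pchains S' R' \<subseteq> pchains S R"
    proof
      fix c' assume "c' \<in> image (inv_into S h) ` pchains S' R'"
      then obtain d where d: "d \<in> pchains S' R'" "c' = inv_into S h ` d" by auto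
      have dS: "d \<subseteq> S'" using d unfolding pchains_def by auto
      have "c' \<subseteq> S" using d dS h by (auto simp: bij_betw_def inv_into_into)
      moreover have "\<forall>a\<in>c'. \<forall>b\<in>c'. R a b \<or> R b a"
      proof (intro ballI)
        fix a b assume "a \<in> c'" "b \<in> c'"
        then obtain a' b' where "a' \<in> d" "b' \<in> d" "a = inv_into S h a'" "b = inv_into S h b'" using d by auto
        moreover have "R' a' b' \<or> R' b' a'" using d \<open>a' \<in> d\<close> \<open>b' \<in> d\<close> unfolding pchains_def by auto
        moreover have "h (inv_into S h a') = a'" "h (inv_into S h b') = b'"
          using dS h \<open>a' \<in> d\<close> \<open>b' \<in> d\<close> by (auto simp: bij_betw_def f_inv_into_f)
        moreover have "inv_into S h a' \<in> S" "inv_into S h b' \<in> S"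
          using dS h \<open>a' \<in> d\<close> \<open>b' \<in> d\<close> by (auto simp: bij_betw_def inv_into_into)
        ultimately show "R a b \<or> R b a" using iso by metis
      qed
      ultimately show "c' \<in> pchains S R" unfolding pchains_def by auto
    qed
  qed
  have "rho S' R' = (\<Sum>c\<in>pchains S R. (-1::int) ^ card (h ` c))"
    unfolding rho_def using sum.reindex_bij_betw[OF bij, of "\<lambda>c. (-1::int) ^ card c"] by simp
  also have "\<dots> = rho S R" unfolding rho_def
    by (rule sum.cong[OF refl]) (metis (no_types, lifting) card_image pchains_def inj inj_on_subset mem_Collect_eq)
  finally show ?thesis by simp
qed



definition pmat :: "nat \<Rightarrow> (nat \<Rightarrow> 'a) \<Rightarrow> ('a \<Rightarrow> 'a \<Rightarrow> 'b) \<Rightarrow> 'b mat" where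
  "pmat n f F = mat n n (\<lambda>(i,j). F (f i) (f j))"

lemma pmat_carrier[simp]: "pmat n f F \<in> carrier_mat n n"
  unfolding pmat_def by simp

lemma pmat_dim[simp]: "dim_row (pmat n f F) = n" "dim_col (pmat n f F) = n"
  unfolding pmat_def by simp_all

lemma pmat_index[simp]: "i < n \<Longrightarrow> j < n \<Longrightarrow> pmat n f F $$ (i,j) = F (f i) (f j)"
  unfolding pmat_def by simp

lemma signof_square: "(signof p :: 'b :: comm_ring_1) * signof p = 1"
  by (metis of_int_1 of_int_mult sign_idempotent)

lemma det_relabel:
  fixes F :: "'a \<Rightarrow> 'a \<Rightarrow> 'b::comm_ring_1"
  assumes f: "bij_betw f {..<n} S" and g: "bij_betw g {..<n} S"
  shows "det (pmat n g F) = det (pmat n f F)"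
proof -
  define p where "p = (\<lambda>i. if i < n then inv_into {..<n} f (g i) else i)"
  have pl: "\<And>i. i < n \<Longrightarrow> p i < n"
    unfolding p_def using f g by (auto simp: bij_betw_def inv_into_into)
       (metis bij_betwE bij_betw_inv_into g f lessThan_iff)
  have gfp: "\<And>i. i < n \<Longrightarrow> g i = f (p i)"
  proof -
    fix i assume i: "i < n"
    hence "g i \<in> f ` {..<n}" using f g by (auto simp: bij_betw_def)
    thus "g i = f (p i)" using i by (simp add: p_def f_inv_into_f)
  qed
  have pbij: "bij_betw p {0..<n} {0..<n}"
  proof -
    have "inj_on p {0..<n}"
    proof (rule inj_onI)
      fix i j assume "i \<in> {0..<n}" "j \<in> {0..<n}" "p i = p j"
      hence "g i = g j" using gfp by auto
      thus "i = j" using g \<open>i \<in> {0..<n}\<close> \<open>j \<in> {0..<n}\<close> by (auto simp: bij_betw_def inj_on_def)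
    qed
    moreover have "p ` {0..<n} \<subseteq> {0..<n}" using pl by auto
    ultimately show ?thesis
      by (simp add: bij_betw_def endo_inj_surj)
  qed
  have pn: "p permutes {0..<n}"
    by (rule bij_imp_permutes[OF pbij]) (simp add: p_def)
  define B where "B = pmat n f F"
  have B: "B \<in> carrier_mat n n" unfolding B_def by simp
  define C where "C = mat n n (\<lambda>(i,j). B $$ (p i, j))"
  have C: "C \<in> carrier_mat n n" unfolding C_def by simp
  have detC: "det C = signof p * det B" unfolding C_def by (rule det_permute_rows[OF B pn])
  have eq: "pmat n g F = transpose_mat (mat n n (\<lambda>(i,j). (transpose_mat C) $$ (p i, j)))"
    by (rule eq_matI) (auto simp: C_def B_def gfp pl)
  have "det (pmat n g F) = det (mat n n (\<lambda>(i,j). (transpose_mat C) $$ (p i, j)))"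
    unfolding eq by (rule det_transpose[of _ n]) simp
  also have "\<dots> = signof p * det (transpose_mat C)"
    by (rule det_permute_rows[OF _ pn]) (simp add: C)
  also have "\<dots> = signof p * det C" using det_transpose[OF C] by simp
  also have "\<dots> = (signof p * signof p) * det B" unfolding detC by (simp add: mult.assoc)
  finally show ?thesis unfolding signof_square B_def by simp
qed

lemma ex_minimal:
  assumes fp: "finite_poset S R" and ne: "S \<noteq> {}"
  shows "\<exists>m\<in>S. \<forall>y\<in>S. R y m \<longrightarrow> y = m"
proof -
  have fin: "finite S" and antis: "\<And>a b. a \<in> S \<Longrightarrow> b \<in> S \<Longrightarrow> R a b \<Longrightarrow> R b a \<Longrightarrow> a = b"
    and trans: "\<And>a b c. a \<in> S \<Longrightarrow> b \<in> S \<Longrightarrow> c \<in> S \<Longrightarrow> R a b \<Longrightarrow> R b c \<Longrightarrow> R a c"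
    and refl: "\<And>a. a \<in> S \<Longrightarrow> R a a"
    using fp unfolding finite_poset_def by blast+
  obtain s where s: "s \<in> S" using ne by auto
  obtain m where m: "m \<in> S" and mmin: "\<forall>y. y \<in> S \<longrightarrow> card {z\<in>S. R z m} \<le> card {z\<in>S. R z y}"
    using ex_has_least_nat[of "\<lambda>x. x \<in> S" s "\<lambda>x. card {z\<in>S. R z x}"] s by blast
  show ?thesis
  proof (intro bexI[OF _ m] ballI impI)
    fix y assume y: "y \<in> S" and yR: "R y m"
    show "y = m"
    proof (rule ccontr)
      assume ne: "y \<noteq> m"
      have "{z\<in>S. R z y} \<subset> {z\<in>S. R z m}"
      proof
        show "{z\<in>S. R z y} \<subseteq> {z\<in>S. R z m}" using trans y m yR by blast
        have "m \<notin> {z\<in>S. R z y}" using antis y m yR ne by blast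
        thus "{z\<in>S. R z y} \<noteq> {z\<in>S. R z m}" using m refl by blast
      qed
      hence "card {z\<in>S. R z y} < card {z\<in>S. R z m}"
        by (rule psubset_card_mono[rotated]) (use fin in auto)
      thus False using mmin y by fastforce
    qed
  qed
qed

lemma finite_poset_flip: "finite_poset S R \<Longrightarrow> finite_poset S (\<lambda>x y. R y x)"
  unfolding finite_poset_def by blast

lemma ex_maximal:
  assumes fp: "finite_poset S R" and ne: "S \<noteq> {}"
  shows "\<exists>m\<in>S. \<forall>y\<in>S. R m y \<longrightarrow> y = m"
  using ex_minimal[OF finite_poset_flip[OF fp] ne] by blast

lemma det_lastrow_unit:
  fixes B :: "'b :: idom mat"
  assumes B: "B \<in> carrier_mat (Suc N) (Suc N)" and r0: "\<And>j. j < N \<Longrightarrow> B $$ (N,j) = 0"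
    and r1: "B $$ (N,N) = 1"
  shows "det B = det (mat N N (\<lambda>(i,j). B $$ (i,j)))"
proof -
  have eq: "B = four_block_mat (mat N N (\<lambda>(i,j). B $$ (i,j))) (mat N 1 (\<lambda>(i,j). B $$ (i,N)))
      (0\<^sub>m 1 N) (mat 1 1 (\<lambda>_. 1))"
    using B r0 r1 by (intro eq_matI) (auto simp: four_block_mat_def Let_def less_Suc_eq)
  have "det B = det (mat N N (\<lambda>(i,j). B $$ (i,j))) * det (mat 1 1 (\<lambda>_. (1::'b)))"
    by (subst eq, rule det_four_block_mat_lower_left_zero) auto
  also have "det (mat 1 1 (\<lambda>_. (1::'b))) = 1" by (subst det_single) auto
  finally show ?thesis by simp
qed

lemma det_lastcol_unit:
  fixes B :: "'b :: idom mat"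
  assumes B: "B \<in> carrier_mat (Suc N) (Suc N)" and r0: "\<And>i. i < N \<Longrightarrow> B $$ (i,N) = 0"
    and r1: "B $$ (N,N) = 1"
  shows "det B = det (mat N N (\<lambda>(i,j). B $$ (i,j)))"
proof -
  have eq: "B = four_block_mat (mat N N (\<lambda>(i,j). B $$ (i,j))) (0\<^sub>m N 1)
      (mat 1 N (\<lambda>(i,j). B $$ (N,j))) (mat 1 1 (\<lambda>_. 1))"
    using B r0 r1 by (intro eq_matI) (auto simp: four_block_mat_def Let_def less_Suc_eq)
  have "det B = det (mat N N (\<lambda>(i,j). B $$ (i,j))) * det (mat 1 1 (\<lambda>_. (1::'b)))"
    by (subst eq, rule det_four_block_mat_upper_right_zero) auto
  also have "det (mat 1 1 (\<lambda>_. (1::'b))) = 1" by (subst det_single) auto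
  finally show ?thesis by simp
qed

lemma det_rowop_last:
  fixes B :: "'b :: comm_ring_1 mat"
  assumes B: "B \<in> carrier_mat (Suc N) (Suc N)"
  shows "det (mat (Suc N) (Suc N) (\<lambda>(i,j). B $$ (i,j) + (if i < N then c i * B $$ (N,j) else 0))) = det B"
proof -
  define E :: "'b mat" where "E = mat (Suc N) (Suc N) (\<lambda>(i,l). (if i = l then 1 else 0) + (if i < N \<and> l = N then c i else 0))"
  have E: "E \<in> carrier_mat (Suc N) (Suc N)" unfolding E_def by simp
  have ut: "upper_triangular E" unfolding upper_triangular_def E_def by auto
  have "det E = prod_list (diag_mat E)" by (rule det_upper_triangular[OF ut E])
  also have "\<dots> = 1" unfolding prod_list_diag_prod using E by (simp add: E_def)
  finally have dE: "det E = 1" .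
  have eq: "mat (Suc N) (Suc N) (\<lambda>(i,j). B $$ (i,j) + (if i < N then c i * B $$ (N,j) else 0)) = E * B"
  proof (rule eq_matI)
    fix i j assume i: "i < dim_row (E * B)" and j: "j < dim_col (E * B)"
    have i': "i < Suc N" and j': "j < Suc N" using i j E B by auto
    have "(E * B) $$ (i,j) = (\<Sum>l\<in>{0..<Suc N}. E $$ (i,l) * B $$ (l,j))"
      using i' j' E B by (simp add: scalar_prod_def)
    also have "\<dots> = (\<Sum>l\<in>{0..<Suc N}. (if l = i then B $$ (i,j) else 0) + (if i < N \<and> l = N then c i * B $$ (N,j) else 0))"
      by (rule sum.cong[OF refl]) (use i' in \<open>auto simp: E_def distrib_right\<close>)
    also have "\<dots> = B $$ (i,j) + (if i < N then c i * B $$ (N,j) else 0)"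
      unfolding sum.distrib using i' by (simp add: sum.delta)
    finally show "mat (Suc N) (Suc N) (\<lambda>(i,j). B $$ (i,j) + (if i < N then c i * B $$ (N,j) else 0)) $$ (i, j) = (E * B) $$ (i, j)"
      using i' j' by simp
  qed (use E B in auto)
  show ?thesis unfolding eq by (subst det_mult[OF E B]) (simp add: dE)
qed

lemma det_colop_last:
  fixes B :: "'b :: comm_ring_1 mat"
  assumes B: "B \<in> carrier_mat (Suc N) (Suc N)"
  shows "det (mat (Suc N) (Suc N) (\<lambda>(i,j). B $$ (i,j) + (if j < N then c j * B $$ (i,N) else 0))) = det B"
proof -
  have BT: "transpose_mat B \<in> carrier_mat (Suc N) (Suc N)" using B by simp
  have eq: "mat (Suc N) (Suc N) (\<lambda>(i,j). B $$ (i,j) + (if j < N then c j * B $$ (i,N) else 0))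
     = transpose_mat (mat (Suc N) (Suc N) (\<lambda>(i,j). transpose_mat B $$ (i,j) + (if i < N then c i * transpose_mat B $$ (N,j) else 0)))"
    using B by (intro eq_matI) auto
  show ?thesis unfolding eq
    by (subst det_transpose) (auto simp: det_rowop_last[OF BT] det_transpose[OF B])
qed

lemma det_row_linear:
  fixes A B C :: "'b :: comm_ring_1 mat"
  assumes A: "A \<in> carrier_mat n n" and B: "B \<in> carrier_mat n n" and C: "C \<in> carrier_mat n n"
    and k: "k < n"
    and same: "\<And>i j. i < n \<Longrightarrow> j < n \<Longrightarrow> i \<noteq> k \<Longrightarrow> B $$ (i,j) = A $$ (i,j) \<and> C $$ (i,j) = A $$ (i,j)"
    and add: "\<And>j. j < n \<Longrightarrow> A $$ (k,j) = B $$ (k,j) + C $$ (k,j)"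
  shows "det A = det B + det C"
proof -
  have key: "\<And>p. p permutes {0..<n} \<Longrightarrow>
     (\<Prod>i = 0..<n. A $$ (i, p i)) = (\<Prod>i = 0..<n. B $$ (i, p i)) + (\<Prod>i = 0..<n. C $$ (i, p i))"
  proof -
    fix p assume p: "p permutes {0..<n}"
    have pk: "p k < n" using p k permutes_in_image by fastforce
    have r: "\<And>M :: 'b mat. (\<Prod>i = 0..<n. M $$ (i, p i)) = M $$ (k, p k) * (\<Prod>i \<in> {0..<n} - {k}. M $$ (i, p i))"
      using k by (subst prod.remove[of _ k]) auto
    have e1: "(\<Prod>i \<in> {0..<n} - {k}. B $$ (i, p i)) = (\<Prod>i \<in> {0..<n} - {k}. A $$ (i, p i))"
      by (rule prod.cong[OF refl]) (use same p permutes_in_image in fastforce)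
    have e2: "(\<Prod>i \<in> {0..<n} - {k}. C $$ (i, p i)) = (\<Prod>i \<in> {0..<n} - {k}. A $$ (i, p i))"
      by (rule prod.cong[OF refl]) (use same p permutes_in_image in fastforce)
    show "?thesis p" unfolding r[of A] r[of B] r[of C] e1 e2 add[OF pk] by (simp add: distrib_right)
  qed
  show ?thesis unfolding det_def'[OF A] det_def'[OF B] det_def'[OF C] sum.distrib[symmetric]
    by (rule sum.cong[OF refl]) (simp add: key distrib_left)
qed

lemma det_zeta:
  assumes "finite_poset S R" and "bij_betw f {..<n} S"
  shows "det (pmat n f (\<lambda>x y. if R x y then 1 else (0::int))) = 1"
  using assms
proof (induction n arbitrary: S f)
  case 0
  thus ?case by (simp add: det_dim_zero)
next
  case (Suc N)
  have fin: "finite S" using Suc.prems unfolding finite_poset_def by auto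
  have cS: "card S = Suc N" using Suc.prems(2) by (simp add: bij_betw_same_card[symmetric])
  hence ne: "S \<noteq> {}" by auto
  obtain M where M: "M \<in> S" and Mmax: "\<forall>y\<in>S. R M y \<longrightarrow> y = M"
    using ex_maximal[OF Suc.prems(1) ne] by blast
  have cS': "card (S - {M}) = N" using cS M fin by simp
  obtain h where h: "bij_betw h {..<N} (S - {M})"
    using ex_bij_betw_nat_finite[of "S - {M}"] fin cS' by (auto simp: atLeast0LessThan)
  define g where "g = (\<lambda>i. if i < N then h i else M)"
  have gh: "bij_betw g {..<N} (S - {M})" using h by (rule bij_betw_cong[THEN iffD1, rotated]) (simp add: g_def)
  have g: "bij_betw g {..<Suc N} S"
  proof -
    have "bij_betw g ({..<N} \<union> {N}) ((S - {M}) \<union> {M})"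
      by (rule bij_betw_combine[OF gh]) (auto simp: g_def bij_betw_def)
    moreover have "{..<N} \<union> {N} = {..<Suc N}" "(S - {M}) \<union> {M} = S" using M by auto
    ultimately show ?thesis by simp
  qed
  let ?F = "\<lambda>x y. if R x y then 1 else (0::int)"
  have "det (pmat (Suc N) f ?F) = det (pmat (Suc N) g ?F)"
    by (rule det_relabel[OF g Suc.prems(2)])
  also have "\<dots> = det (mat N N (\<lambda>(i,j). pmat (Suc N) g ?F $$ (i,j)))"
  proof (rule det_lastrow_unit)
    show "\<And>j. j < N \<Longrightarrow> pmat (Suc N) g ?F $$ (N, j) = 0"
    proof -
      fix j assume j: "j < N"
      have "g j \<in> S - {M}" using gh j by (auto simp: bij_betw_def)
      thus "pmat (Suc N) g ?F $$ (N, j) = 0" using j Mmax by (auto simp: g_def)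
    qed
    show "pmat (Suc N) g ?F $$ (N, N) = 1"
      using Suc.prems(1) M unfolding finite_poset_def by (simp add: g_def)
  qed simp
  also have "mat N N (\<lambda>(i,j). pmat (Suc N) g ?F $$ (i,j)) = pmat N g ?F"
    by (rule eq_matI) auto
  also have "det (pmat N g ?F) = 1"
    by (rule Suc.IH[OF finite_poset_subset[OF Suc.prems(1)] gh]) auto
  finally show ?case .
qed



lemma det_border:
  fixes Z :: "int mat"
  assumes Z: "Z \<in> carrier_mat N N" and dZ: "det Z = 1"
  shows "det (mat (Suc N) (Suc N) (\<lambda>(i,j). if i < N \<and> j < N then 1 - Z $$ (i,j) else if i < N \<or> j < N then 1 else 0))
     = (-1)^N - det (mat N N (\<lambda>(i,j). 1 - Z $$ (i,j)))"
proof -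
  define M where "M = mat (Suc N) (Suc N) (\<lambda>(i,j). if i < N \<and> j < N then 1 - Z $$ (i,j) else if i < N \<or> j < N then 1 else (0::int))"
  define M1 where "M1 = mat (Suc N) (Suc N) (\<lambda>(i,j). if i < N \<and> j < N then 1 - Z $$ (i,j) else (1::int))"
  define M0 where "M0 = mat (Suc N) (Suc N) (\<lambda>(i,j). if i < N \<and> j < N then 1 - Z $$ (i,j) else if i < N then 1 else if j < N then 0 else (1::int))"
  have lin: "det M1 = det M + det M0"
    by (rule det_row_linear[of _ "Suc N" _ _ N]) (auto simp: M_def M1_def M0_def less_Suc_eq)
  have d0: "det M0 = det (mat N N (\<lambda>(i,j). 1 - Z $$ (i,j)))"
  proof -
    have "det M0 = det (mat N N (\<lambda>(i,j). M0 $$ (i,j)))"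
      by (rule det_lastrow_unit) (auto simp: M0_def)
    also have "mat N N (\<lambda>(i,j). M0 $$ (i,j)) = mat N N (\<lambda>(i,j). 1 - Z $$ (i,j))"
      by (rule eq_matI) (auto simp: M0_def)
    finally show ?thesis .
  qed
  have d1: "det M1 = (-1)^N"
  proof -
    have M1c: "M1 \<in> carrier_mat (Suc N) (Suc N)" unfolding M1_def by simp
    have "det M1 = det (mat (Suc N) (Suc N) (\<lambda>(i,j). M1 $$ (i,j) + (if i < N then (-1) * M1 $$ (N,j) else 0)))"
      by (rule det_rowop_last[OF M1c, symmetric])
    also have "\<dots> = det (mat N N (\<lambda>(i,j). (mat (Suc N) (Suc N) (\<lambda>(i,j). M1 $$ (i,j) + (if i < N then (-1) * M1 $$ (N,j) else 0))) $$ (i,j)))"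
      by (rule det_lastcol_unit) (auto simp: M1_def)
    also have "mat N N (\<lambda>(i,j). (mat (Suc N) (Suc N) (\<lambda>(i,j). M1 $$ (i,j) + (if i < N then (-1) * M1 $$ (N,j) else 0))) $$ (i,j))
       = (-1) \<cdot>\<^sub>m Z"
      using Z by (intro eq_matI) (auto simp: M1_def)
    also have "det ((-1) \<cdot>\<^sub>m Z) = (-1)^N" using Z dZ by simp
    finally show ?thesis .
  qed
  show ?thesis using lin d0 d1 unfolding M_def by simp
qed

lemma space_matrix_pmat: "space_matrix n f R = pmat n f (\<lambda>x y. if R x y then 0 else 1)"
  unfolding space_matrix_def pmat_def by simp

lemma det_space:
  assumes "finite_poset S R" "bij_betw f {..<n} S"
  shows "det (space_matrix n f R) = (-1)^n * rho S R"
  using assms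
proof (induction n arbitrary: S f rule: less_induct)
  case (less n)
  note fp = less.prems(1) and fb = less.prems(2)
  have fin: "finite S" and reflS: "\<And>a. a \<in> S \<Longrightarrow> R a a"
    and antis: "\<And>a b. a \<in> S \<Longrightarrow> b \<in> S \<Longrightarrow> R a b \<Longrightarrow> R b a \<Longrightarrow> a = b"
    and trans: "\<And>a b c. a \<in> S \<Longrightarrow> b \<in> S \<Longrightarrow> c \<in> S \<Longrightarrow> R a b \<Longrightarrow> R b c \<Longrightarrow> R a c"
    using fp unfolding finite_poset_def by blast+
  have cS: "card S = n" using fb by (simp add: bij_betw_same_card[symmetric])
  show ?case
  proof (cases n)
    case 0
    hence "S = {}" using cS fin by simp
    thus ?thesis using 0 by (simp add: rho_empty space_matrix_def)
  next
    case (Suc N)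
    hence ne: "S \<noteq> {}" using cS by auto
    obtain m where m: "m \<in> S" and mmin: "\<forall>y\<in>S. R y m \<longrightarrow> y = m"
      using ex_minimal[OF fp ne] by blast
    define U where "U = {y\<in>S. R m y \<and> y \<noteq> m}"
    define W where "W = S - U - {m}"
    have US: "U \<subseteq> S" and WS: "W \<subseteq> S" unfolding U_def W_def by auto
    have finU: "finite U" and finW: "finite W" using US WS fin finite_subset by auto
    define k where "k = card U"
    define w where "w = card W"
    have SWU: "S = W \<union> U \<union> {m}" using m unfolding W_def U_def by auto
    have d1: "W \<inter> U = {}" and d2: "(W \<union> U) \<inter> {m} = {}" unfolding W_def U_def by auto
    have "card S = card (W \<union> U) + card {m}" unfolding SWU
      by (rule card_Un_disjoint) (use finU finW d2 in auto)
    also have "card (W \<union> U) = w + k" unfolding w_def k_def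
      by (rule card_Un_disjoint) (use finU finW d1 in auto)
    finally have "card S = w + k + 1" by simp
    hence Nwk: "N = w + k" using cS Suc by simp
    obtain hW where hW: "bij_betw hW {..<w} W"
      using ex_bij_betw_nat_finite[OF finW] by (auto simp: atLeast0LessThan w_def)
    obtain hU where hU: "bij_betw hU {..<k} U"
      using ex_bij_betw_nat_finite[OF finU] by (auto simp: atLeast0LessThan k_def)
    define g where "g = (\<lambda>i. if i < w then hW i else if i < w + k then hU (i - w) else m)"
    have gW: "bij_betw g {..<w} W" using hW by (rule bij_betw_cong[THEN iffD1, rotated]) (simp add: g_def)
    have gU': "bij_betw g {w..<w+k} U"
    proof -
      have "bij_betw (\<lambda>i. i - w) {w..<w+k} {..<k}"
        by (rule bij_betw_byWitness[where f' = "\<lambda>i. i + w"]) auto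
      hence "bij_betw (hU \<circ> (\<lambda>i. i - w)) {w..<w+k} U" using hU by (rule bij_betw_trans)
      thus ?thesis by (rule bij_betw_cong[THEN iffD1, rotated]) (simp add: g_def)
    qed
    have gN: "bij_betw g {..<N} (S - {m})"
    proof -
      have "bij_betw g ({..<w} \<union> {w..<w+k}) (W \<union> U)"
        by (rule bij_betw_combine[OF gW gU']) (auto simp: W_def)
      moreover have "{..<w} \<union> {w..<w+k} = {..<N}" using Nwk by auto
      moreover have "W \<union> U = S - {m}" unfolding W_def U_def by auto
      ultimately show ?thesis by simp
    qed
    have g: "bij_betw g {..<Suc N} S"
    proof -
      have "bij_betw g ({..<N} \<union> {N}) ((S - {m}) \<union> {m})"
        by (rule bij_betw_combine[OF gN]) (auto simp: g_def Nwk bij_betw_def)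
      moreover have "{..<N} \<union> {N} = {..<Suc N}" "(S - {m}) \<union> {m} = S" using m by auto
      ultimately show ?thesis by simp
    qed
    have gUk: "\<And>i. i < k \<Longrightarrow> g (w + i) = hU i" by (simp add: g_def)
    have gm: "g N = m" by (simp add: g_def Nwk)
    have gW_in: "\<And>i. i < w \<Longrightarrow> g i \<in> W" using gW by (auto simp: bij_betw_def)
    have gU_in: "\<And>i. w \<le> i \<Longrightarrow> i < N \<Longrightarrow> g i \<in> U" using gU' Nwk by (auto simp: bij_betw_def)
    have gS_in: "\<And>i. i < N \<Longrightarrow> g i \<in> S - {m}" using gN by (auto simp: bij_betw_def)
    define a where "a = (\<lambda>i j. if R (g i) (g j) then 0 else (1::int))"
    have F1: "\<And>i. i < N \<Longrightarrow> a i N = 1"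
      using gS_in mmin gm unfolding a_def by force
    have F1': "\<And>i. i < N \<Longrightarrow> \<not> R (g i) (g N)" using F1 unfolding a_def by (metis zero_neq_one)
    have F2: "a N N = 0" using reflS m gm unfolding a_def by simp
    have F3: "\<And>j. j < w \<Longrightarrow> a N j = 1"
      using gW_in gm unfolding a_def W_def U_def by auto
    have F4: "\<And>j. w \<le> j \<Longrightarrow> j < N \<Longrightarrow> a N j = 0"
      using gU_in gm unfolding a_def U_def by auto
    have F5: "\<And>i j. w \<le> i \<Longrightarrow> i < N \<Longrightarrow> j < w \<Longrightarrow> a i j = 1"
    proof -
      fix i j assume i: "w \<le> i" "i < N" and j: "j < w"
      have u: "g i \<in> U" using gU_in i by auto
      have v: "g j \<in> W" using gW_in j by auto
      show "a i j = 1"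
      proof (rule ccontr)
        assume "a i j \<noteq> 1"
        hence "R (g i) (g j)" unfolding a_def by (auto split: if_splits)
        hence "R m (g j)" using u v trans m unfolding U_def W_def by blast
        thus False using v unfolding W_def U_def by auto
      qed
    qed
    let ?F = "\<lambda>x y. if R x y then 0 else (1::int)"
    let ?Z = "\<lambda>x y. if R x y then 1 else (0::int)"
    have A_eq: "det (space_matrix n f R) = det (pmat (Suc N) g ?F)"
      unfolding space_matrix_pmat Suc by (rule det_relabel[OF g fb[unfolded Suc]])
    define Ae where "Ae = mat (Suc N) (Suc N) (\<lambda>(i,j). if i < N then a i j else if j < N then 1 else (0::int))"
    define Au where "Au = mat (Suc N) (Suc N) (\<lambda>(i,j). if i < N then a i j else if w \<le> j \<and> j < N then 1 else (0::int))"
    have lin: "det Ae = det (pmat (Suc N) g ?F) + det Au"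
    proof (rule det_row_linear[of _ "Suc N" _ _ N])
      show "\<And>j. j < Suc N \<Longrightarrow> Ae $$ (N, j) = pmat (Suc N) g ?F $$ (N, j) + Au $$ (N, j)"
      proof -
        fix j assume j: "j < Suc N"
        show "Ae $$ (N, j) = pmat (Suc N) g ?F $$ (N, j) + Au $$ (N, j)"
          using j F2 F3[of j] F4[of j] Nwk reflS[OF m] gm unfolding Ae_def Au_def a_def
          by (cases "j < w"; cases "j < N") (auto simp: less_Suc_eq)
      qed
    qed (auto simp: Ae_def Au_def a_def)
    have dAe: "det Ae = (-1)^N - det (space_matrix N g R)"
    proof -
      have "Ae = mat (Suc N) (Suc N) (\<lambda>(i,j). if i < N \<and> j < N then 1 - pmat N g ?Z $$ (i,j) else if i < N \<or> j < N then 1 else 0)"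
        by (rule eq_matI) (auto simp: Ae_def F1' a_def less_Suc_eq)
      moreover have "mat N N (\<lambda>(i,j). 1 - pmat N g ?Z $$ (i,j)) = space_matrix N g R"
        by (rule eq_matI) (auto simp: space_matrix_def)
      ultimately show ?thesis
        using det_border[of "pmat N g ?Z" N] det_zeta[OF finite_poset_subset[OF fp] gN] by simp
    qed
    define c where "c = (\<lambda>j. if j < w then (-1) else (0::int))"
    define Au' where "Au' = mat (Suc N) (Suc N) (\<lambda>(i,j). Au $$ (i,j) + (if j < N then c j * Au $$ (i,N) else 0))"
    have dAu': "det Au' = det Au" unfolding Au'_def by (rule det_colop_last) (simp add: Au_def)
    define Zm where "Zm = (-1) \<cdot>\<^sub>m pmat w g ?Z"
    define LR where "LR = mat (Suc k) (Suc k) (\<lambda>(i,j). Au' $$ (w+i, w+j))"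
    have blk: "Au' = four_block_mat Zm (mat w (Suc k) (\<lambda>(i,j). Au' $$ (i, w+j))) (0\<^sub>m (Suc k) w) LR"
    proof (rule eq_matI)
      fix i j assume "i < dim_row (four_block_mat Zm (mat w (Suc k) (\<lambda>(i,j). Au' $$ (i, w+j))) (0\<^sub>m (Suc k) w) LR)"
        "j < dim_col (four_block_mat Zm (mat w (Suc k) (\<lambda>(i,j). Au' $$ (i, w+j))) (0\<^sub>m (Suc k) w) LR)"
      hence i: "i < Suc N" and j: "j < Suc N" by (auto simp: Zm_def LR_def Nwk)
      show "Au' $$ (i,j) = four_block_mat Zm (mat w (Suc k) (\<lambda>(i,j). Au' $$ (i, w+j))) (0\<^sub>m (Suc k) w) LR $$ (i,j)"
      proof (cases "j < w")
        case jw: True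
        show ?thesis
        proof (cases "i < w")
          case True
          thus ?thesis using i j jw F1[of i] Nwk
            by (auto simp: four_block_mat_def Let_def Au'_def Au_def Zm_def c_def a_def)
        next
          case False
          hence "Au' $$ (i,j) = 0"
            using i j jw F1[of i] F5[of i j] Nwk by (auto simp: Au'_def Au_def c_def less_Suc_eq)
          thus ?thesis using False i j jw Nwk
            by (auto simp: four_block_mat_def Let_def Zm_def LR_def)
        qed
      next
        case jw: False
        show ?thesis
        proof (cases "i < w")
          case True
          thus ?thesis using i j jw Nwk
            by (auto simp: four_block_mat_def Let_def Zm_def LR_def)
        next
          case False
          thus ?thesis using i j jw Nwk
            by (auto simp: four_block_mat_def Let_def Zm_def LR_def)
        qed
      qed
    qed (auto simp: Au'_def Zm_def LR_def Nwk)
    have dZm: "det Zm = (-1)^w"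
      unfolding Zm_def using det_zeta[OF finite_poset_subset[OF fp WS] gW] by simp
    have dLR: "det LR = (-1)^k - det (space_matrix k hU R)"
    proof -
      have "LR = mat (Suc k) (Suc k) (\<lambda>(i,j). if i < k \<and> j < k then 1 - pmat k hU ?Z $$ (i,j) else if i < k \<or> j < k then 1 else 0)"
      proof (rule eq_matI)
        fix i j assume "i < dim_row (mat (Suc k) (Suc k) (\<lambda>(i,j). if i < k \<and> j < k then 1 - pmat k hU ?Z $$ (i,j) else if i < k \<or> j < k then 1 else 0))"
          "j < dim_col (mat (Suc k) (Suc k) (\<lambda>(i,j). if i < k \<and> j < k then 1 - pmat k hU ?Z $$ (i,j) else if i < k \<or> j < k then 1 else 0))"
        hence i: "i < Suc k" and j: "j < Suc k" by auto
        show "LR $$ (i,j) = mat (Suc k) (Suc k) (\<lambda>(i,j). if i < k \<and> j < k then 1 - pmat k hU ?Z $$ (i,j) else if i < k \<or> j < k then 1 else 0) $$ (i,j)"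
          using i j F1[of "w+i"] gUk[of i] gUk[of j] Nwk
          by (auto simp: LR_def Au'_def Au_def c_def a_def less_Suc_eq)
      qed (auto simp: LR_def)
      moreover have "mat k k (\<lambda>(i,j). 1 - pmat k hU ?Z $$ (i,j)) = space_matrix k hU R"
        by (rule eq_matI) (auto simp: space_matrix_def)
      ultimately show ?thesis
        using det_border[of "pmat k hU ?Z" k] det_zeta[OF finite_poset_subset[OF fp US] hU] by simp
    qed
    have dAu: "det Au = (-1)^w * ((-1)^k - det (space_matrix k hU R))"
      using dAu' blk dZm dLR det_four_block_mat_lower_left_zero[of Zm w "mat w (Suc k) (\<lambda>(i,j). Au' $$ (i, w+j))" "Suc k" "0\<^sub>m (Suc k) w" LR]
      by (simp add: Zm_def LR_def)
    have IH1: "det (space_matrix N g R) = (-1)^N * rho (S - {m}) R"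
      by (rule less.IH[OF _ finite_poset_subset[OF fp] gN]) (auto simp: Suc)
    have kn: "k < n" using Nwk Suc by simp
    have IH2: "det (space_matrix k hU R) = (-1)^k * rho U R"
      by (rule less.IH[OF kn finite_poset_subset[OF fp US] hU])
    have rS: "rho S R = rho (S - {m}) R - rho U R"
    proof -
      have e: "{y\<in>S. R y m \<and> y \<noteq> m} = {}" using mmin by auto
      show ?thesis using rho_remove[OF fp m] unfolding e rho_empty U_def by simp
    qed
    have "det (space_matrix n f R) = det Ae - det Au" using A_eq lin by simp
    also have "\<dots> = (-1)^N - (-1)^N * rho (S - {m}) R - (-1)^w * ((-1)^k - (-1)^k * rho U R)"
      unfolding dAe dAu IH1 IH2 ..
    also have "\<dots> = (-1)^N * (rho U R - rho (S - {m}) R)"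
      unfolding Nwk power_add by (simp add: algebra_simps)
    also have "\<dots> = (-1)^n * rho S R" unfolding rS Suc by (simp add: algebra_simps)
    finally show ?thesis .
  qed
qed



lemma pt_istopology: "istopology (\<lambda>U. U \<subseteq> S \<and> (\<forall>x\<in>U. \<forall>y\<in>S. R y x \<longrightarrow> y \<in> U))"
  unfolding istopology_def by blast

lemma pt_open: "openin (poset_topology S R) U \<longleftrightarrow> U \<subseteq> S \<and> (\<forall>x\<in>U. \<forall>y\<in>S. R y x \<longrightarrow> y \<in> U)"
  unfolding poset_topology_def by (simp add: topology_inverse'[OF pt_istopology[of S R]])

lemma pt_topspace[simp]: "topspace (poset_topology S R) = S"
  unfolding topspace_def pt_open by auto

lemma pt_sub:
  assumes fp: "finite_poset S R" and A: "A \<subseteq> S"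
  shows "subtopology (poset_topology S R) A = poset_topology A R"
proof -
  have reflS: "\<And>a. a \<in> S \<Longrightarrow> R a a"
    and trans: "\<And>a b c. a \<in> S \<Longrightarrow> b \<in> S \<Longrightarrow> c \<in> S \<Longrightarrow> R a b \<Longrightarrow> R b c \<Longrightarrow> R a c"
    using fp unfolding finite_poset_def by blast+
  show ?thesis unfolding topology_eq
  proof (intro allI iffI)
    fix V assume "openin (subtopology (poset_topology S R) A) V"
    then obtain T where T: "openin (poset_topology S R) T" "V = T \<inter> A"
      unfolding openin_subtopology by blast
    thus "openin (poset_topology A R) V" unfolding pt_open using A by blast
  next
    fix V assume V: "openin (poset_topology A R) V"
    define T where "T = {y\<in>S. \<exists>v\<in>V. R y v}"
    have VA: "V \<subseteq> A" and Vd: "\<forall>x\<in>V. \<forall>y\<in>A. R y x \<longrightarrow> y \<in> V" using V unfolding pt_open by auto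
    have "openin (poset_topology S R) T" unfolding pt_open
    proof (intro conjI ballI impI)
      show "T \<subseteq> S" unfolding T_def by blast
      fix x y assume x: "x \<in> T" and y: "y \<in> S" and yx: "R y x"
      obtain v where v: "v \<in> V" "R x v" "x \<in> S" using x unfolding T_def by blast
      have "R y v" using trans[OF y v(3) _ yx v(2)] v VA A by blast
      thus "y \<in> T" unfolding T_def using y v by blast
    qed
    moreover have "V = T \<inter> A"
    proof
      show "V \<subseteq> T \<inter> A" unfolding T_def using VA A reflS by blast
      show "T \<inter> A \<subseteq> V" unfolding T_def using Vd by blast
    qed
    ultimately show "openin (subtopology (poset_topology S R) A) V"
      unfolding openin_subtopology by blast
  qed
qed

lemma pt_cont:
  assumes fp: "finite_poset S R" and fp': "finite_poset S' R'"
  shows "continuous_map (poset_topology S R) (poset_topology S' R') f \<longleftrightarrow>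
    (\<forall>x\<in>S. f x \<in> S') \<and> (\<forall>x\<in>S. \<forall>y\<in>S. R x y \<longrightarrow> R' (f x) (f y))"
proof -
  have reflS: "\<And>a. a \<in> S \<Longrightarrow> R a a" using fp unfolding finite_poset_def by blast
  have reflS': "\<And>a. a \<in> S' \<Longrightarrow> R' a a"
    and trans': "\<And>a b c. a \<in> S' \<Longrightarrow> b \<in> S' \<Longrightarrow> c \<in> S' \<Longrightarrow> R' a b \<Longrightarrow> R' b c \<Longrightarrow> R' a c"
    using fp' unfolding finite_poset_def by blast+
  show ?thesis
  proof
    assume c: "continuous_map (poset_topology S R) (poset_topology S' R') f"
    have inS: "\<forall>x\<in>S. f x \<in> S'" using c unfolding continuous_map_def by auto
    moreover have "\<forall>x\<in>S. \<forall>y\<in>S. R x y \<longrightarrow> R' (f x) (f y)"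
    proof (intro ballI impI)
      fix x y assume x: "x \<in> S" and y: "y \<in> S" and xy: "R x y"
      have "openin (poset_topology S' R') {z\<in>S'. R' z (f y)}"
        unfolding pt_open using trans' inS y by blast
      hence "openin (poset_topology S R) {z\<in>S. f z \<in> {z\<in>S'. R' z (f y)}}"
        using c unfolding continuous_map_def by auto
      hence "\<forall>u\<in>{z\<in>S. f z \<in> {z\<in>S'. R' z (f y)}}. \<forall>v\<in>S. R v u \<longrightarrow> v \<in> {z\<in>S. f z \<in> {z\<in>S'. R' z (f y)}}"
        unfolding pt_open by blast
      moreover have "y \<in> {z\<in>S. f z \<in> {z\<in>S'. R' z (f y)}}" using y inS reflS' by auto
      ultimately show "R' (f x) (f y)" using x xy by blast
    qed
    ultimately show "(\<forall>x\<in>S. f x \<in> S') \<and> (\<forall>x\<in>S. \<forall>y\<in>S. R x y \<longrightarrow> R' (f x) (f y))" by blast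
  next
    assume m: "(\<forall>x\<in>S. f x \<in> S') \<and> (\<forall>x\<in>S. \<forall>y\<in>S. R x y \<longrightarrow> R' (f x) (f y))"
    show "continuous_map (poset_topology S R) (poset_topology S' R') f"
      unfolding continuous_map_def pt_topspace
    proof (intro conjI allI impI)
      show "f \<in> S \<rightarrow> S'" using m by auto
      fix U assume "openin (poset_topology S' R') U"
      thus "openin (poset_topology S R) {x \<in> S. f x \<in> U}"
        unfolding pt_open using m by blast
    qed
  qed
qed

lemma homeo_rho:
  assumes fp: "finite_poset S R" and fp': "finite_poset S' R'"
    and h: "poset_topology S R homeomorphic_space poset_topology S' R'"
  shows "rho S R = rho S' R'"
proof -
  obtain f g where fg: "homeomorphic_maps (poset_topology S R) (poset_topology S' R') f g"
    using h unfolding homeomorphic_space_def by blast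
  have cf: "continuous_map (poset_topology S R) (poset_topology S' R') f"
    and cg: "continuous_map (poset_topology S' R') (poset_topology S R) g"
    and gf: "\<forall>x\<in>S. g (f x) = x" and fg': "\<forall>y\<in>S'. f (g y) = y"
    using fg unfolding homeomorphic_maps_def by auto
  have mf: "(\<forall>x\<in>S. f x \<in> S') \<and> (\<forall>x\<in>S. \<forall>y\<in>S. R x y \<longrightarrow> R' (f x) (f y))"
    using cf pt_cont[OF fp fp'] by blast
  have mg: "(\<forall>x\<in>S'. g x \<in> S) \<and> (\<forall>x\<in>S'. \<forall>y\<in>S'. R' x y \<longrightarrow> R (g x) (g y))"
    using cg pt_cont[OF fp' fp] by blast
  have bij: "bij_betw f S S'"
    by (rule bij_betw_byWitness[where f' = g]) (use gf fg' mf mg in auto)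
  show ?thesis
  proof (rule rho_iso[OF bij])
    fix x y assume x: "x \<in> S" and y: "y \<in> S"
    show "R x y = R' (f x) (f y)" using mf mg x y gf by metis
  qed
qed

definition dbeat :: "'a set \<Rightarrow> ('a \<Rightarrow> 'a \<Rightarrow> bool) \<Rightarrow> 'a \<Rightarrow> bool" where
  "dbeat S R x \<longleftrightarrow> x \<in> S \<and> (\<exists>y\<in>S. y \<noteq> x \<and> R y x \<and> (\<forall>z\<in>S. R z x \<and> z \<noteq> x \<longrightarrow> R z y))"

lemma stong:
  assumes fp: "finite_poset S R" and nb: "\<forall>x. \<not> dbeat S R x"
    and fS: "\<forall>x\<in>S. f x \<in> S" and fm: "\<forall>x\<in>S. \<forall>y\<in>S. R x y \<longrightarrow> R (f x) (f y)"
    and le: "\<forall>x\<in>S. R (f x) x"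
  shows "\<forall>x\<in>S. f x = x"
proof (rule ccontr)
  have fin: "finite S" and antis: "\<And>a b. a \<in> S \<Longrightarrow> b \<in> S \<Longrightarrow> R a b \<Longrightarrow> R b a \<Longrightarrow> a = b"
    and trans: "\<And>a b c. a \<in> S \<Longrightarrow> b \<in> S \<Longrightarrow> c \<in> S \<Longrightarrow> R a b \<Longrightarrow> R b c \<Longrightarrow> R a c"
    and refl: "\<And>a. a \<in> S \<Longrightarrow> R a a"
    using fp unfolding finite_poset_def by blast+
  assume "\<not> (\<forall>x\<in>S. f x = x)"
  then obtain s where s: "s \<in> S \<and> f s \<noteq> s" by blast
  obtain x where x: "x \<in> S \<and> f x \<noteq> x"
    and xmin: "\<forall>y. y \<in> S \<and> f y \<noteq> y \<longrightarrow> card {z\<in>S. R z x} \<le> card {z\<in>S. R z y}"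
    using ex_has_least_nat[of "\<lambda>x. x \<in> S \<and> f x \<noteq> x" s "\<lambda>x. card {z\<in>S. R z x}"] s by blast
  have below: "\<And>z. z \<in> S \<Longrightarrow> R z x \<Longrightarrow> z \<noteq> x \<Longrightarrow> f z = z"
  proof (rule ccontr)
    fix z assume z: "z \<in> S" "R z x" "z \<noteq> x" "f z \<noteq> z"
    have "{w\<in>S. R w z} \<subset> {w\<in>S. R w x}"
    proof
      show "{w\<in>S. R w z} \<subseteq> {w\<in>S. R w x}" using trans z x by blast
      have "x \<notin> {w\<in>S. R w z}" using antis z x by blast
      thus "{w\<in>S. R w z} \<noteq> {w\<in>S. R w x}" using x refl by blast
    qed
    hence "card {w\<in>S. R w z} < card {w\<in>S. R w x}"
      by (rule psubset_card_mono[rotated]) (use fin in auto)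
    thus False using xmin z by fastforce
  qed
  have "dbeat S R x" unfolding dbeat_def
  proof (intro conjI bexI[of _ "f x"])
    show "x \<in> S" "f x \<in> S" "f x \<noteq> x" "R (f x) x" using x fS le by auto
    show "\<forall>z\<in>S. R z x \<and> z \<noteq> x \<longrightarrow> R z (f x)"
    proof (intro ballI impI)
      fix z assume z: "z \<in> S" "R z x \<and> z \<noteq> x"
      have "R (f z) (f x)" using fm z x by blast
      thus "R z (f x)" using below[of z] z by simp
    qed
  qed
  thus False using nb by blast
qed

lemma stong_ge:
  assumes fp: "finite_poset S R" and nb: "\<forall>x. \<not> dbeat S (\<lambda>a b. R b a) x"
    and fS: "\<forall>x\<in>S. f x \<in> S" and fm: "\<forall>x\<in>S. \<forall>y\<in>S. R x y \<longrightarrow> R (f x) (f y)"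
    and ge: "\<forall>x\<in>S. R x (f x)"
  shows "\<forall>x\<in>S. f x = x"
  using stong[OF finite_poset_flip[OF fp] nb fS] fm ge by blast



lemma slice_mono:
  assumes fp: "finite_poset S R"
    and h: "continuous_map (prod_topology (top_of_set {0..1::real}) (poset_topology S R)) (poset_topology S R) h"
    and t: "t \<in> {0..1}"
  shows "(\<forall>x\<in>S. h (t,x) \<in> S) \<and> (\<forall>x\<in>S. \<forall>y\<in>S. R x y \<longrightarrow> R (h (t,x)) (h (t,y)))"
proof -
  have "continuous_map (poset_topology S R) (prod_topology (top_of_set {0..1::real}) (poset_topology S R)) (\<lambda>x. (t, x))"
    by (rule continuous_map_pairedI) (use t in simp_all)
  hence "continuous_map (poset_topology S R) (poset_topology S R) (h \<circ> (\<lambda>x. (t, x)))"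
    using h by (rule continuous_map_compose)
  hence "continuous_map (poset_topology S R) (poset_topology S R) (\<lambda>x. h (t, x))"
    by (simp add: o_def)
  thus ?thesis unfolding pt_cont[OF fp fp] .
qed

lemma local_le:
  assumes fp: "finite_poset S R"
    and h: "continuous_map (prod_topology (top_of_set {0..1::real}) (poset_topology S R)) (poset_topology S R) h"
    and t: "t \<in> {0..1}"
  shows "\<exists>V. openin (top_of_set {0..1::real}) V \<and> t \<in> V \<and> (\<forall>s\<in>V. \<forall>x\<in>S. R (h (s,x)) (h (t,x)))"
proof -
  have fin: "finite S" and reflS: "\<And>a. a \<in> S \<Longrightarrow> R a a"
    and trans: "\<And>a b c. a \<in> S \<Longrightarrow> b \<in> S \<Longrightarrow> c \<in> S \<Longrightarrow> R a b \<Longrightarrow> R b c \<Longrightarrow> R a c"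
    using fp unfolding finite_poset_def by blast+
  have sl: "\<forall>x\<in>S. h (t,x) \<in> S" using slice_mono[OF fp h t] by blast
  have each: "\<forall>x\<in>S. \<exists>U. openin (top_of_set {0..1::real}) U \<and> t \<in> U \<and> (\<forall>s\<in>U. R (h (s,x)) (h (t,x)))"
  proof
    fix x assume x: "x \<in> S"
    define Ox where "Ox = {z\<in>S. R z (h (t,x))}"
    have "openin (poset_topology S R) Ox" unfolding pt_open Ox_def
    proof (intro conjI ballI impI)
      show "{z \<in> S. R z (h (t, x))} \<subseteq> S" by blast
      fix u v assume "u \<in> {z \<in> S. R z (h (t, x))}" "v \<in> S" "R v u"
      thus "v \<in> {z \<in> S. R z (h (t, x))}" using trans sl x by blast
    qed
    have P: "openin (prod_topology (top_of_set {0..1::real}) (poset_topology S R))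
        {p \<in> topspace (prod_topology (top_of_set {0..1::real}) (poset_topology S R)). h p \<in> Ox}"
      using conjunct2[OF h[unfolded continuous_map_def], rule_format, OF \<open>openin (poset_topology S R) Ox\<close>] .
    have tx: "(t,x) \<in> {p \<in> topspace (prod_topology (top_of_set {0..1::real}) (poset_topology S R)). h p \<in> Ox}"
      using t x sl reflS unfolding Ox_def by (simp add: topspace_prod_topology)
    obtain U V where UV: "openin (top_of_set {0..1::real}) U" "openin (poset_topology S R) V" "t \<in> U" "x \<in> V"
      "U \<times> V \<subseteq> {p \<in> topspace (prod_topology (top_of_set {0..1::real}) (poset_topology S R)). h p \<in> Ox}"
      using P[unfolded openin_prod_topology_alt, rule_format, OF tx] by (elim exE conjE) blast
    have "\<forall>s\<in>U. R (h (s,x)) (h (t,x))"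
    proof
      fix s assume "s \<in> U"
      hence "(s,x) \<in> U \<times> V" using UV by auto
      hence "h (s,x) \<in> Ox" using UV(5) by blast
      thus "R (h (s,x)) (h (t,x))" unfolding Ox_def by blast
    qed
    thus "\<exists>U. openin (top_of_set {0..1::real}) U \<and> t \<in> U \<and> (\<forall>s\<in>U. R (h (s,x)) (h (t,x)))"
      using UV by blast
  qed
  then obtain Uf where Uf: "\<forall>x\<in>S. openin (top_of_set {0..1::real}) (Uf x) \<and> t \<in> Uf x \<and> (\<forall>s\<in>Uf x. R (h (s,x)) (h (t,x)))"
    using bchoice[OF each] by blast
  define V where "V = \<Inter> (insert {0..1::real} (Uf ` S))"
  have "openin (top_of_set {0..1::real}) V" unfolding V_def
  proof (rule openin_Inter)
    show "finite (insert {0..1::real} (Uf ` S))" using fin by simp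
    show "insert {0..1::real} (Uf ` S) \<noteq> {}" by simp
    fix X assume "X \<in> insert {0..1::real} (Uf ` S)"
    thus "openin (top_of_set {0..1::real}) X" using Uf by auto
  qed
  moreover have "t \<in> V" unfolding V_def using t Uf by auto
  moreover have "\<forall>s\<in>V. \<forall>x\<in>S. R (h (s,x)) (h (t,x))" unfolding V_def using Uf by blast
  ultimately show ?thesis by blast
qed

lemma contractible_nobeat:
  assumes fp: "finite_poset S R" and nb1: "\<forall>x. \<not> dbeat S R x"
    and nb2: "\<forall>x. \<not> dbeat S (\<lambda>a b. R b a) x"
    and c: "contractible_space (poset_topology S R)"
  shows "\<exists>a. S \<subseteq> {a}"
proof -
  obtain a where "homotopic_with (\<lambda>x. True) (poset_topology S R) (poset_topology S R) id (\<lambda>x. a)"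
    using c unfolding contractible_space_def by blast
  then obtain h where h: "continuous_map (prod_topology (top_of_set {0..1::real}) (poset_topology S R)) (poset_topology S R) h"
    and h0: "\<forall>x. h (0,x) = x" and h1: "\<forall>x. h (1,x) = a"
    unfolding homotopic_with_def by auto
  define I where "I = {0..1::real}"
  define T where "T = {t\<in>I. \<forall>x\<in>S. h (t,x) = x}"
  have TI: "T \<subseteq> I" unfolding T_def by auto
  have oT: "openin (top_of_set I) T"
    unfolding openin_subopen[of _ T]
  proof
    fix t assume tT: "t \<in> T"
    hence tI: "t \<in> {0..1}" unfolding T_def I_def by auto
    obtain V where V: "openin (top_of_set {0..1::real}) V" "t \<in> V" "\<forall>s\<in>V. \<forall>x\<in>S. R (h (s,x)) (h (t,x))"
      using local_le[OF fp h tI] by blast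
    have VI: "V \<subseteq> {0..1}" using openin_imp_subset[OF V(1)] by simp
    have "V \<subseteq> T"
    proof
      fix s assume sV: "s \<in> V"
      hence sI: "s \<in> {0..1}" using VI by auto
      have ms: "(\<forall>x\<in>S. h (s,x) \<in> S) \<and> (\<forall>x\<in>S. \<forall>y\<in>S. R x y \<longrightarrow> R (h (s,x)) (h (s,y)))"
        using slice_mono[OF fp h sI] .
      have le: "\<forall>x\<in>S. R (h (s,x)) x" using V(3) sV tT unfolding T_def by auto
      have "\<forall>x\<in>S. h (s,x) = x"
        using stong[OF fp nb1, of "\<lambda>x. h (s,x)"] ms le by blast
      thus "s \<in> T" unfolding T_def I_def using sI by blast
    qed
    thus "\<exists>V. openin (top_of_set I) V \<and> t \<in> V \<and> V \<subseteq> T" using V unfolding I_def by blast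
  qed
  have oC: "openin (top_of_set I) (I - T)"
    unfolding openin_subopen[of _ "I - T"]
  proof
    fix t assume tC: "t \<in> I - T"
    hence tI: "t \<in> {0..1}" unfolding I_def by auto
    obtain V where V: "openin (top_of_set {0..1::real}) V" "t \<in> V" "\<forall>s\<in>V. \<forall>x\<in>S. R (h (s,x)) (h (t,x))"
      using local_le[OF fp h tI] by blast
    have VI: "V \<subseteq> {0..1}" using openin_imp_subset[OF V(1)] by simp
    have "V \<subseteq> I - T"
    proof
      fix s assume sV: "s \<in> V"
      hence sI: "s \<in> {0..1}" using VI by auto
      show "s \<in> I - T"
      proof (rule ccontr)
        assume "s \<notin> I - T"
        hence sT: "s \<in> T" using sI unfolding I_def by auto
        have mt: "(\<forall>x\<in>S. h (t,x) \<in> S) \<and> (\<forall>x\<in>S. \<forall>y\<in>S. R x y \<longrightarrow> R (h (t,x)) (h (t,y)))"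
          using slice_mono[OF fp h tI] .
        have ge: "\<forall>x\<in>S. R x (h (t,x))" using V(3) sV sT unfolding T_def by auto
        have "\<forall>x\<in>S. h (t,x) = x"
          using stong_ge[OF fp nb2, of "\<lambda>x. h (t,x)"] mt ge by blast
        hence "t \<in> T" unfolding T_def I_def using tI by blast
        thus False using tC by blast
      qed
    qed
    thus "\<exists>V. openin (top_of_set I) V \<and> t \<in> V \<and> V \<subseteq> I - T" using V unfolding I_def by blast
  qed
  have cT: "closedin (top_of_set I) T"
    unfolding closedin_def using TI oC by simp
  have "T = {} \<or> T = I"
    using connected_clopen[of I] oT cT unfolding I_def by simp
  moreover have "0 \<in> T" unfolding T_def I_def using h0 by simp
  ultimately have "1 \<in> T" unfolding I_def by auto
  hence "\<forall>x\<in>S. a = x" unfolding T_def using h1 by simp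
  hence "S \<subseteq> {a}" by auto
  thus ?thesis by (rule exI)
qed

lemma retract_contractible:
  assumes fp: "finite_poset S R" and c: "contractible_space (poset_topology S R)"
    and b: "b \<in> S" and y: "y \<in> S" "y \<noteq> b"
    and dn: "\<forall>z\<in>S. z \<noteq> b \<longrightarrow> R z b \<longrightarrow> R z y"
    and up: "\<forall>z\<in>S. z \<noteq> b \<longrightarrow> R b z \<longrightarrow> R y z"
  shows "contractible_space (poset_topology (S - {b}) R)"
proof -
  have fp': "finite_poset (S - {b}) R" using finite_poset_subset[OF fp] by blast
  have reflS: "\<And>a. a \<in> S \<Longrightarrow> R a a" using fp unfolding finite_poset_def by blast
  define r where "r = (\<lambda>z. if z = b then y else z)"
  have cr: "continuous_map (poset_topology S R) (poset_topology (S - {b}) R) r"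
    unfolding pt_cont[OF fp fp']
  proof (intro conjI ballI impI)
    fix x assume "x \<in> S" thus "r x \<in> S - {b}" using y unfolding r_def by auto
  next
    fix x z assume x: "x \<in> S" and z: "z \<in> S" and xz: "R x z"
    show "R (r x) (r z)"
      using dn up reflS[OF y(1)] x z xz unfolding r_def by auto
  qed
  have ci: "continuous_map (poset_topology (S - {b}) R) (poset_topology S R) id"
    unfolding pt_cont[OF fp' fp] by auto
  obtain a where "homotopic_with (\<lambda>x. True) (poset_topology S R) (poset_topology S R) id (\<lambda>x. a)"
    using c unfolding contractible_space_def by blast
  hence "homotopic_with (\<lambda>x. True) (poset_topology S R) (poset_topology (S - {b}) R) (r \<circ> id) (r \<circ> (\<lambda>x. a))"
    using cr by (rule homotopic_with_compose_continuous_map_left) simp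
  hence H: "homotopic_with (\<lambda>x. True) (poset_topology (S - {b}) R) (poset_topology (S - {b}) R) (r \<circ> id \<circ> id) (r \<circ> (\<lambda>x. a) \<circ> id)"
    using ci by (rule homotopic_with_compose_continuous_map_right) simp
  have H0: "homotopic_with (\<lambda>x. True) (poset_topology (S - {b}) R) (poset_topology (S - {b}) R) id (r \<circ> id \<circ> id)"
    by (rule homotopic_with_equal) (auto simp: r_def)
  have "homotopic_with (\<lambda>x. True) (poset_topology (S - {b}) R) (poset_topology (S - {b}) R) id (r \<circ> (\<lambda>x. a) \<circ> id)"
    using homotopic_with_trans[OF H0 H] .
  moreover have "r \<circ> (\<lambda>x. a) \<circ> id = (\<lambda>x. r a)" by (simp add: o_def)
  ultimately have "homotopic_with (\<lambda>x. True) (poset_topology (S - {b}) R) (poset_topology (S - {b}) R) id (\<lambda>x. r a)"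
    by simp
  thus ?thesis unfolding contractible_space_def by blast
qed

lemma contractible_rho:
  assumes "finite_poset S R" and "S \<noteq> {}" and "contractible_space (poset_topology S R)"
  shows "rho S R = 0"
  using assms
proof (induction "card S" arbitrary: S rule: less_induct)
  case less
  note fp = less.prems(1) and ne = less.prems(2) and c = less.prems(3)
  have fin: "finite S" and reflS: "\<And>a. a \<in> S \<Longrightarrow> R a a"
    and trans: "\<And>a b c. a \<in> S \<Longrightarrow> b \<in> S \<Longrightarrow> c \<in> S \<Longrightarrow> R a b \<Longrightarrow> R b c \<Longrightarrow> R a c"
    using fp unfolding finite_poset_def by blast+
  show ?case
  proof (cases "\<exists>b. dbeat S R b")
    case True
    then obtain b y where b: "b \<in> S" and y: "y \<in> S" "y \<noteq> b" "R y b"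
      and ymax: "\<forall>z\<in>S. R z b \<and> z \<noteq> b \<longrightarrow> R z y"
      unfolding dbeat_def by blast
    have dn: "\<forall>z\<in>S. z \<noteq> b \<longrightarrow> R z b \<longrightarrow> R z y" using ymax by blast
    have up: "\<forall>z\<in>S. z \<noteq> b \<longrightarrow> R b z \<longrightarrow> R y z"
    proof (intro ballI impI)
      fix z assume z: "z \<in> S" "R b z"
      show "R y z" by (rule trans[of y b z]) (use y b z in auto)
    qed
    have c': "contractible_space (poset_topology (S - {b}) R)"
      by (rule retract_contractible[OF fp c b y(1,2) dn up])
    have r': "rho (S - {b}) R = 0"
      by (rule less.hyps[OF card_Diff1_less[OF fin b] finite_poset_subset[OF fp] _ c']) (use y in auto)
    have rL: "rho {z\<in>S. R z b \<and> z \<noteq> b} R = 0"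
      by (rule rho_top[of _ _ y]) (use finite_poset_subset[OF fp] y ymax in auto)
    show ?thesis using rho_remove[OF fp b] r' rL by simp
  next
    case nb1: False
    show ?thesis
    proof (cases "\<exists>b. dbeat S (\<lambda>a b. R b a) b")
      case True
      then obtain b y where b: "b \<in> S" and y: "y \<in> S" "y \<noteq> b" "R b y"
        and ymin: "\<forall>z\<in>S. R b z \<and> z \<noteq> b \<longrightarrow> R y z"
        unfolding dbeat_def by blast
      have up: "\<forall>z\<in>S. z \<noteq> b \<longrightarrow> R b z \<longrightarrow> R y z" using ymin by blast
      have dn: "\<forall>z\<in>S. z \<noteq> b \<longrightarrow> R z b \<longrightarrow> R z y"
      proof (intro ballI impI)
        fix z assume z: "z \<in> S" "R z b"
        show "R z y" by (rule trans[of z b y]) (use y b z in auto)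
      qed
      have c': "contractible_space (poset_topology (S - {b}) R)"
        by (rule retract_contractible[OF fp c b y(1,2) dn up])
      have r': "rho (S - {b}) R = 0"
        by (rule less.hyps[OF card_Diff1_less[OF fin b] finite_poset_subset[OF fp] _ c']) (use y in auto)
      have rU: "rho {z\<in>S. R b z \<and> z \<noteq> b} R = 0"
        by (rule rho_bot[of _ _ y]) (use finite_poset_subset[OF fp] y ymin in auto)
      show ?thesis using rho_remove[OF fp b] r' rU by simp
    next
      case False
      then obtain a where "S \<subseteq> {a}"
        using contractible_nobeat[OF fp _ _ c] nb1 by blast
      hence Sa: "S = {a}" using ne by blast
      show ?thesis by (rule rho_top[OF fp, of a]) (use Sa reflS in auto)
    qed
  qed
qed

lemma wbp_rho:
  assumes fp: "finite_poset S R" and w: "weak_beat_point S R x"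
  shows "rho S R = rho (S - {x}) R"
proof -
  have x: "x \<in> S" using w unfolding weak_beat_point_def by blast
  have key: "\<And>A. A \<subseteq> S \<Longrightarrow> contractible_sub S R A \<Longrightarrow> rho A R = 0"
  proof -
    fix A assume A: "A \<subseteq> S" and cA: "contractible_sub S R A"
    hence "A \<noteq> {}" "contractible_space (poset_topology A R)"
      unfolding contractible_sub_def using pt_sub[OF fp A] by auto
    thus "rho A R = 0" using contractible_rho finite_poset_subset[OF fp A] by blast
  qed
  have "contractible_sub S R {y\<in>S. R y x \<and> y \<noteq> x} \<or> contractible_sub S R {y\<in>S. R x y \<and> y \<noteq> x}"
    using w unfolding weak_beat_point_def by blast
  hence "rho {y\<in>S. R y x \<and> y \<noteq> x} R = 0 \<or> rho {y\<in>S. R x y \<and> y \<noteq> x} R = 0"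
    using key[of "{y\<in>S. R y x \<and> y \<noteq> x}"] key[of "{y\<in>S. R x y \<and> y \<noteq> x}"] by blast
  thus ?thesis using rho_remove[OF fp x] by (elim disjE) simp_all
qed

lemma step_rho:
  assumes "wbp_step A r B r'"
  shows "rho A r = rho B r'"
proof -
  have fA: "finite_poset A r" and fB: "finite_poset B r'" using assms unfolding wbp_step_def by auto
  from assms consider (a) x where "weak_beat_point A r x"
      "poset_topology (A - {x}) r homeomorphic_space poset_topology B r'"
    | (b) x where "weak_beat_point B r' x"
      "poset_topology A r homeomorphic_space poset_topology (B - {x}) r'"
    unfolding wbp_step_def by blast
  thus ?thesis
  proof cases
    case a
    thus ?thesis using wbp_rho[OF fA a(1)] homeo_rho[OF finite_poset_subset[OF fA] fB a(2)] by simp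
  next
    case b
    thus ?thesis using wbp_rho[OF fB b(1)] homeo_rho[OF fA finite_poset_subset[OF fB] b(2)] by simp
  qed
qed

theorem mainTheorem6:
  fixes X Y :: "'a set" and leX leY :: "'a \<Rightarrow> 'a \<Rightarrow> bool"
    and f g :: "nat \<Rightarrow> 'a"
  assumes "finite_poset X leX" and "finite_poset Y leY"
    and "simple_homotopy_equivalent X leX Y leY"
    and "bij_betw f {..<card X} X" and "bij_betw g {..<card Y} Y"
  shows "\<bar>Determinant.det (space_matrix (card X) f leX)\<bar>
       = \<bar>Determinant.det (space_matrix (card Y) g leY)\<bar>"
proof -
  obtain S0 R0 where ch: "(\<lambda>(A,r) (B,r'). wbp_step A r B r')\<^sup>*\<^sup>* (X, leX) (S0, R0)"
    and hom: "poset_topology S0 R0 homeomorphic_space poset_topology Y leY"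
    using assms(3) unfolding simple_homotopy_equivalent_def by blast
  have gen: "\<And>p q. (\<lambda>(A,r) (B,r'). wbp_step A r B r')\<^sup>*\<^sup>* p q \<Longrightarrow> p = (X, leX) \<Longrightarrow>
      finite_poset (fst q) (snd q) \<and> rho (fst q) (snd q) = rho X leX"
  proof -
    fix p q assume "(\<lambda>(A,r) (B,r'). wbp_step A r B r')\<^sup>*\<^sup>* p q" "p = (X, leX)"
    thus "finite_poset (fst q) (snd q) \<and> rho (fst q) (snd q) = rho X leX"
    proof (induction rule: rtranclp_induct)
      case base
      thus ?case using assms(1) by simp
    next
      case (step y z)
      obtain B r' where z: "z = (B, r')" by fastforce
      obtain A r where y: "y = (A, r)" by fastforce
      have st: "wbp_step A r B r'" using step.hyps(2) y z by simp
      have "finite_poset B r'" using st unfolding wbp_step_def by blast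
      moreover have "rho B r' = rho A r" using step_rho[OF st] by simp
      ultimately show ?case using step.IH step.prems y z by simp
    qed
  qed
  have g0: "finite_poset S0 R0 \<and> rho S0 R0 = rho X leX" using gen[OF ch refl] by simp
  have eq: "rho X leX = rho Y leY"
    using g0 homeo_rho[OF _ assms(2) hom] by simp
  have "\<bar>Determinant.det (space_matrix (card X) f leX)\<bar> = \<bar>rho X leX\<bar>"
    using det_space[OF assms(1) assms(4)] by (simp add: abs_mult)
  also have "\<dots> = \<bar>Determinant.det (space_matrix (card Y) g leY)\<bar>"
    using det_space[OF assms(2) assms(5)] eq by (simp add: abs_mult)
  finally show ?thesis .
qed

end
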